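(* Let $\mathcal F=(\mathcal A,U,\varphi)$ be a sequential formalism, let $\mathcal S,\mathcal S'\subseteq\mathcal A$, and let $H$ be a refinement from $\mathcal S$ to $\mathcal S'$. Assume: (A1) $\mathcal S$ is algebraically stable through $H$; (A2) every algebraically consistent network over $\mathcal S'$ is satisfiable. Then every algebraically consistent network over $\mathcal S$ is satisfiable. If, in addition, $\mathcal S$ is a $\Rsh$-closed $\diamond\cap$-closed subset, then $\mathcal S$ is algebraically tractable.
   Context: A finite non-associative algebra is a tuple $(\mathcal A,\cup,\neg,\emptyset,\mathcal B,\diamond,\overline{\cdot},e)$ where $(\mathcal A,\cup,\neg,\emptyset,\mathcal B)$ is a finite Boolean algebra (with $x\cap y=\neg(\neg x\cup\neg y)$) and for all $x,y,z$: $\overline{\overline x}=x$, $\overline{x\cup y}=\overline x\cup\overline y$, $\overline{x\diamond y}=\overline y\diamond\overline x$, $e\diamond x=x\diamond e=x$, $x\diamond(y\cup z)=(x\diamond y)\cup(x\diamond z)$, $(x\diamond y)\cap\overline z=\emptyset\iff(y\diamond z)\cap\overline x=\emptyset$. $\mathcal B$ is the universal relation; $r\subseteq r'$ means $r\cup r'=r'$; atoms are basic relations. A projection operator from $\mathcal A$ to $\mathcal A'$ is a map $\Rsh$ with $\Rsh(r\cup r')=\Rsh r\cup\Rsh r'$, $\Rsh\overline r=\overline{\Rsh r}$. A finite multi-algebra is a product $\mathcal A_1\times\cdots\times\mathcal A_m$ of finite non-associative algebras with projection operators $\Rsh_i^j:\mathcal A_i\to\mathcal A_j$ for all distinct $i,j$.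 Relations $R=(R_1,\dots,R_m)$; basic if all $R_i$ are atoms; universal relation $\mathcal B=(\mathcal B_1,\dots,\mathcal B_m)$; $\subseteq,\diamond,\cap,\cup,\overline{\cdot}$ componentwise; $B\in R$ means $B$ basic, $B\subseteq R$. $R$ is closed under projection if $R_j\subseteq\Rsh_i^jR_i$ for all distinct $i,j$; the projection closure $\Rsh R$ is obtained by repeatedly replacing $R_j$ by $R_j\cap\Rsh_i^jR_i$ until a fixed point. A sequential formalism is $(\mathcal A,U,\varphi)$ with $\mathcal A$ a finite multi-algebra, $U\ne\emptyset$, $\varphi:\mathcal A\to 2^{U\times U}$ with $\varphi(\Rsh R)=\varphi(R)$, $\varphi(\overline R)=\varphi(R)^{-1}$, $\varphi((\emptyset,\dots,\emptyset))=\emptyset$, $\varphi(R\diamond R')\supseteq(\varphi(R)\circ\varphi(R'))\cap\varphi(\mathcal B)$, $\varphi(R\cap R')=\varphi(R)\cap\varphi(R')$, $\varphi(R)=\bigcup_{B\in R}\varphi(B)$. A network over $\mathcal S\subseteq\mathcal A$ is a finite set $E$ of variables with $N^{xy}\in\mathcal S$ for all distinct $x,y\in E$, $N^{yx}=\overline{N^{xy}}$; slices $N_i^{xy}=(N^{xy})_i$. A solution is $(u_x)_{x\in E}\subseteq U$ with $(u_x,u_y)\in\varphi(N^{xy})$ for all distinct $x,y$; $N$ is satisfiable if it has one. $N$ is trivially inconsistent if some $N_i^{xy}=\emptyset$; closed under composition if $N^{xz}\subseteq N^{xy}\diamond N^{yz}$ for all distinct $x,y,z$; closed under projection if every $N^{xy}$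 is; algebraically closed if both; algebraically consistent if algebraically closed and not trivially inconsistent. The algebraic closure of $N$ is obtained by repeatedly applying $N^{xz}\leftarrow\Rsh N^{xz}$ and $N^{xz}\leftarrow N^{xz}\cap(N^{xy}\diamond N^{yz})$ until a fixed point. A subset $\mathcal S$ is $\diamond\cap$-closed if $(R\diamond R')\cap R''\in\mathcal S$ for all $R,R',R''\in\mathcal S$; $\Rsh$-closed if $\Rsh R\in\mathcal S$ for all $R\in\mathcal S$; algebraically tractable if every network over $\mathcal S$ is satisfiable iff its algebraic closure is not trivially inconsistent. A refinement from $\mathcal S$ to $\mathcal S'$ is a function $H:\mathcal S\to\mathcal S'$ with $H(R)\subseteq R$ and $H(R)$ not trivially inconsistent (no empty component) whenever $R$ is not. $H(N)$ denotes the network obtained by replacing each $N^{xy}$ by $H(N^{xy})$. $\mathcal S$ is algebraically stable through $H$ if $H(N)$ is algebraically consistent for every algebraically consistent network $N$ over $\mathcal S$. *)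

theory Defs
  imports Main
begin

text \<open>The fields: carrier, union (join), complement (neg),
empty relation (bot), universal relation (top = B), composition (comp),
converse (conv) and identity (e).\<close>

record 'r nalg =
  carrier :: "'r set"
  join :: "'r \<Rightarrow> 'r \<Rightarrow> 'r"
  neg :: "'r \<Rightarrow> 'r"
  bot :: "'r"
  top :: "'r"
  comp :: "'r \<Rightarrow> 'r \<Rightarrow> 'r"
  conv :: "'r \<Rightarrow> 'r"
  unit :: "'r"

definition meet :: "'r nalg \<Rightarrow> 'r \<Rightarrow> 'r \<Rightarrow> 'r" where
  "meet A x y = neg A (join A (neg A x) (neg A y))"

definition le :: "'r nalg \<Rightarrow> 'r \<Rightarrow> 'r \<Rightarrow> bool" where
  "le A x y \<longleftrightarrow> join A x y = y"

definition is_atom :: "'r nalg \<Rightarrow> 'r \<Rightarrow> bool" where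
  "is_atom A x \<longleftrightarrow> x \<in> carrier A \<and> x \<noteq> bot A \<and>
     (\<forall>y \<in> carrier A. le A y x \<longrightarrow> y = bot A \<or> y = x)"

definition boolean_alg :: "'r nalg \<Rightarrow> bool" where
  "boolean_alg A \<longleftrightarrow>
     finite (carrier A) \<and> bot A \<in> carrier A \<and> top A \<in> carrier A \<and>
     (\<forall>x \<in> carrier A. \<forall>y \<in> carrier A. join A x y \<in> carrier A) \<and>
     (\<forall>x \<in> carrier A. neg A x \<in> carrier A) \<and>
     (\<forall>x \<in> carrier A. \<forall>y \<in> carrier A. join A x y = join A y x) \<and>
     (\<forall>x \<in> carrier A. \<forall>y \<in> carrier A. meet A x y = meet A y x) \<and>
     (\<forall>x \<in> carrier A. \<forall>y \<in> carrier A. \<forall>z \<in> carrier A.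
        join A x (join A y z) = join A (join A x y) z) \<and>
     (\<forall>x \<in> carrier A. \<forall>y \<in> carrier A. \<forall>z \<in> carrier A.
        meet A x (meet A y z) = meet A (meet A x y) z) \<and>
     (\<forall>x \<in> carrier A. \<forall>y \<in> carrier A. join A x (meet A x y) = x) \<and>
     (\<forall>x \<in> carrier A. \<forall>y \<in> carrier A. meet A x (join A x y) = x) \<and>
     (\<forall>x \<in> carrier A. \<forall>y \<in> carrier A. \<forall>z \<in> carrier A.
        join A x (meet A y z) = meet A (join A x y) (join A x z)) \<and>
     (\<forall>x \<in> carrier A. \<forall>y \<in> carrier A. \<forall>z \<in> carrier A.
        meet A x (join A y z) = join A (meet A x y) (meet A x z)) \<and>
     (\<forall>x \<in> carrier A. join A x (neg A x) = top A) \<and>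
     (\<forall>x \<in> carrier A. meet A x (neg A x) = bot A)"

definition nonassoc_alg :: "'r nalg \<Rightarrow> bool" where
  "nonassoc_alg A \<longleftrightarrow> boolean_alg A \<and> unit A \<in> carrier A \<and>
     (\<forall>x \<in> carrier A. \<forall>y \<in> carrier A. comp A x y \<in> carrier A) \<and>
     (\<forall>x \<in> carrier A. conv A x \<in> carrier A) \<and>
     (\<forall>x \<in> carrier A. conv A (conv A x) = x) \<and>
     (\<forall>x \<in> carrier A. \<forall>y \<in> carrier A. conv A (join A x y) = join A (conv A x) (conv A y)) \<and>
     (\<forall>x \<in> carrier A. \<forall>y \<in> carrier A. conv A (comp A x y) = comp A (conv A y) (conv A x)) \<and>
     (\<forall>x \<in> carrier A. comp A (unit A) x = x \<and> comp A x (unit A) = x) \<and>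
     (\<forall>x \<in> carrier A. \<forall>y \<in> carrier A. \<forall>z \<in> carrier A.
        comp A x (join A y z) = join A (comp A x y) (comp A x z)) \<and>
     (\<forall>x \<in> carrier A. \<forall>y \<in> carrier A. \<forall>z \<in> carrier A.
        meet A (comp A x y) (conv A z) = bot A \<longleftrightarrow> meet A (comp A y z) (conv A x) = bot A)"

text \<open>A multi-algebra: the list of component algebras A_0..A_{m-1} and the
projection operators proj i j : A_i \<rightarrow> A_j.  Relations are lists of
length m.\<close>

record 'r malg =
  algs :: "'r nalg list"
  proj :: "nat \<Rightarrow> nat \<Rightarrow> 'r \<Rightarrow> 'r"

abbreviation dim :: "'r malg \<Rightarrow> nat" where
  "dim M \<equiv> length (algs M)"

abbreviation alg :: "'r malg \<Rightarrow> nat \<Rightarrow> 'r nalg" where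
  "alg M i \<equiv> algs M ! i"

definition multi_alg :: "'r malg \<Rightarrow> bool" where
  "multi_alg M \<longleftrightarrow>
     (\<forall>i < dim M. nonassoc_alg (alg M i)) \<and>
     (\<forall>i < dim M. \<forall>j < dim M. i \<noteq> j \<longrightarrow>
        (\<forall>x \<in> carrier (alg M i). proj M i j x \<in> carrier (alg M j)) \<and>
        (\<forall>x \<in> carrier (alg M i). \<forall>y \<in> carrier (alg M i).
            proj M i j (join (alg M i) x y) = join (alg M j) (proj M i j x) (proj M i j y)) \<and>
        (\<forall>x \<in> carrier (alg M i).
            proj M i j (conv (alg M i) x) = conv (alg M j) (proj M i j x)))"

definition rels :: "'r malg \<Rightarrow> 'r list set" where
  "rels M = {R. length R = dim M \<and> (\<forall>i < dim M. R ! i \<in> carrier (alg M i))}"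

definition rcomp :: "'r malg \<Rightarrow> 'r list \<Rightarrow> 'r list \<Rightarrow> 'r list" where
  "rcomp M R R' = map (\<lambda>i. comp (alg M i) (R ! i) (R' ! i)) [0..<dim M]"

definition rinter :: "'r malg \<Rightarrow> 'r list \<Rightarrow> 'r list \<Rightarrow> 'r list" where
  "rinter M R R' = map (\<lambda>i. meet (alg M i) (R ! i) (R' ! i)) [0..<dim M]"

definition rconv :: "'r malg \<Rightarrow> 'r list \<Rightarrow> 'r list" where
  "rconv M R = map (\<lambda>i. conv (alg M i) (R ! i)) [0..<dim M]"

definition runiv :: "'r malg \<Rightarrow> 'r list" where
  "runiv M = map (\<lambda>i. top (alg M i)) [0..<dim M]"

definition rempty :: "'r malg \<Rightarrow> 'r list" where
  "rempty M = map (\<lambda>i. bot (alg M i)) [0..<dim M]"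

definition rsubseteq :: "'r malg \<Rightarrow> 'r list \<Rightarrow> 'r list \<Rightarrow> bool" where
  "rsubseteq M R R' \<longleftrightarrow> (\<forall>i < dim M. le (alg M i) (R ! i) (R' ! i))"

definition rbasic :: "'r malg \<Rightarrow> 'r list \<Rightarrow> bool" where
  "rbasic M R \<longleftrightarrow> R \<in> rels M \<and> (\<forall>i < dim M. is_atom (alg M i) (R ! i))"

definition rtriv :: "'r malg \<Rightarrow> 'r list \<Rightarrow> bool" where
  "rtriv M R \<longleftrightarrow> (\<exists>i < dim M. R ! i = bot (alg M i))"

definition proj_closed :: "'r malg \<Rightarrow> 'r list \<Rightarrow> bool" where
  "proj_closed M R \<longleftrightarrow>
     (\<forall>i < dim M. \<forall>j < dim M. i \<noteq> j \<longrightarrow> le (alg M j) (R ! j) (proj M i j (R ! i)))"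

definition proj_step :: "'r malg \<Rightarrow> 'r list \<Rightarrow> 'r list \<Rightarrow> bool" where
  "proj_step M R R' \<longleftrightarrow> (\<exists>i < dim M. \<exists>j < dim M. i \<noteq> j \<and>
      R' = R[j := meet (alg M j) (R ! j) (proj M i j (R ! i))])"

definition proj_closure :: "'r malg \<Rightarrow> 'r list \<Rightarrow> 'r list \<Rightarrow> bool" where
  "proj_closure M R R' \<longleftrightarrow> (proj_step M)\<^sup>*\<^sup>* R R' \<and> proj_closed M R'"

definition seq_formalism :: "'r malg \<Rightarrow> 'u set \<Rightarrow> ('r list \<Rightarrow> ('u \<times> 'u) set) \<Rightarrow> bool" where
  "seq_formalism M U \<phi> \<longleftrightarrow> multi_alg M \<and> U \<noteq> {} \<and>
     (\<forall>R \<in> rels M. \<phi> R \<subseteq> U \<times> U) \<and>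
     (\<forall>R \<in> rels M. \<forall>R'. proj_closure M R R' \<longrightarrow> \<phi> R' = \<phi> R) \<and>
     (\<forall>R \<in> rels M. \<phi> (rconv M R) = (\<phi> R)\<inverse>) \<and>
     \<phi> (rempty M) = {} \<and>
     (\<forall>R \<in> rels M. \<forall>R' \<in> rels M. (\<phi> R O \<phi> R') \<inter> \<phi> (runiv M) \<subseteq> \<phi> (rcomp M R R')) \<and>
     (\<forall>R \<in> rels M. \<forall>R' \<in> rels M. \<phi> (rinter M R R') = \<phi> R \<inter> \<phi> R') \<and>
     (\<forall>R \<in> rels M. \<phi> R = (\<Union>B \<in> {B. rbasic M B \<and> rsubseteq M B R}. \<phi> B))"

definition network_over :: "'r malg \<Rightarrow> 'r list set \<Rightarrow> 'v set \<Rightarrow> ('v \<Rightarrow> 'v \<Rightarrow> 'r list) \<Rightarrow> bool" where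
  "network_over M S E N \<longleftrightarrow> finite E \<and>
     (\<forall>x \<in> E. \<forall>y \<in> E. x \<noteq> y \<longrightarrow> N x y \<in> S \<and> N y x = rconv M (N x y))"

definition network :: "'r malg \<Rightarrow> 'v set \<Rightarrow> ('v \<Rightarrow> 'v \<Rightarrow> 'r list) \<Rightarrow> bool" where
  "network M E N \<longleftrightarrow> network_over M (rels M) E N"

definition solution :: "('r list \<Rightarrow> ('u \<times> 'u) set) \<Rightarrow> 'u set \<Rightarrow> 'v set
    \<Rightarrow> ('v \<Rightarrow> 'v \<Rightarrow> 'r list) \<Rightarrow> ('v \<Rightarrow> 'u) \<Rightarrow> bool" where
  "solution \<phi> U E N u \<longleftrightarrow> (\<forall>x \<in> E. u x \<in> U) \<and>
     (\<forall>x \<in> E. \<forall>y \<in> E. x \<noteq> y \<longrightarrow> (u x, u y) \<in> \<phi> (N x y))"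

definition satisfiable :: "('r list \<Rightarrow> ('u \<times> 'u) set) \<Rightarrow> 'u set \<Rightarrow> 'v set
    \<Rightarrow> ('v \<Rightarrow> 'v \<Rightarrow> 'r list) \<Rightarrow> bool" where
  "satisfiable \<phi> U E N \<longleftrightarrow> (\<exists>u. solution \<phi> U E N u)"

definition triv_incons :: "'r malg \<Rightarrow> 'v set \<Rightarrow> ('v \<Rightarrow> 'v \<Rightarrow> 'r list) \<Rightarrow> bool" where
  "triv_incons M E N \<longleftrightarrow> (\<exists>x \<in> E. \<exists>y \<in> E. x \<noteq> y \<and> rtriv M (N x y))"

definition comp_closed_net :: "'r malg \<Rightarrow> 'v set \<Rightarrow> ('v \<Rightarrow> 'v \<Rightarrow> 'r list) \<Rightarrow> bool" where
  "comp_closed_net M E N \<longleftrightarrow> (\<forall>x \<in> E. \<forall>y \<in> E. \<forall>z \<in> E.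
     x \<noteq> y \<and> y \<noteq> z \<and> x \<noteq> z \<longrightarrow> rsubseteq M (N x z) (rcomp M (N x y) (N y z)))"

definition proj_closed_net :: "'r malg \<Rightarrow> 'v set \<Rightarrow> ('v \<Rightarrow> 'v \<Rightarrow> 'r list) \<Rightarrow> bool" where
  "proj_closed_net M E N \<longleftrightarrow> (\<forall>x \<in> E. \<forall>y \<in> E. x \<noteq> y \<longrightarrow> proj_closed M (N x y))"

definition alg_closed :: "'r malg \<Rightarrow> 'v set \<Rightarrow> ('v \<Rightarrow> 'v \<Rightarrow> 'r list) \<Rightarrow> bool" where
  "alg_closed M E N \<longleftrightarrow> comp_closed_net M E N \<and> proj_closed_net M E N"

definition alg_consistent :: "'r malg \<Rightarrow> 'v set \<Rightarrow> ('v \<Rightarrow> 'v \<Rightarrow> 'r list) \<Rightarrow> bool" where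
  "alg_consistent M E N \<longleftrightarrow> network M E N \<and> alg_closed M E N \<and> \<not> triv_incons M E N"

definition upd_net :: "'r malg \<Rightarrow> ('v \<Rightarrow> 'v \<Rightarrow> 'r list) \<Rightarrow> 'v \<Rightarrow> 'v \<Rightarrow> 'r list
    \<Rightarrow> ('v \<Rightarrow> 'v \<Rightarrow> 'r list)" where
  "upd_net M N x z R = (\<lambda>a b. if a = x \<and> b = z then R
                          else if a = z \<and> b = x then rconv M R else N a b)"

definition alg_step :: "'r malg \<Rightarrow> 'v set \<Rightarrow> ('v \<Rightarrow> 'v \<Rightarrow> 'r list)
    \<Rightarrow> ('v \<Rightarrow> 'v \<Rightarrow> 'r list) \<Rightarrow> bool" where
  "alg_step M E N N' \<longleftrightarrow>
     (\<exists>x \<in> E. \<exists>z \<in> E. x \<noteq> z \<and>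
        (\<exists>R. proj_closure M (N x z) R \<and> N' = upd_net M N x z R)) \<or>
     (\<exists>x \<in> E. \<exists>y \<in> E. \<exists>z \<in> E. x \<noteq> y \<and> y \<noteq> z \<and> x \<noteq> z \<and>
        N' = upd_net M N x z (rinter M (N x z) (rcomp M (N x y) (N y z))))"

definition alg_closure :: "'r malg \<Rightarrow> 'v set \<Rightarrow> ('v \<Rightarrow> 'v \<Rightarrow> 'r list)
    \<Rightarrow> ('v \<Rightarrow> 'v \<Rightarrow> 'r list) \<Rightarrow> bool" where
  "alg_closure M E N N' \<longleftrightarrow> (alg_step M E)\<^sup>*\<^sup>* N N' \<and> alg_closed M E N'"

definition compinter_closed :: "'r malg \<Rightarrow> 'r list set \<Rightarrow> bool" where
  "compinter_closed M S \<longleftrightarrow>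
     (\<forall>R \<in> S. \<forall>R' \<in> S. \<forall>R'' \<in> S. rinter M (rcomp M R R') R'' \<in> S)"

definition projection_closed_set :: "'r malg \<Rightarrow> 'r list set \<Rightarrow> bool" where
  "projection_closed_set M S \<longleftrightarrow> (\<forall>R \<in> S. \<forall>R'. proj_closure M R R' \<longrightarrow> R' \<in> S)"

definition alg_tractable :: "'r malg \<Rightarrow> 'u set \<Rightarrow> ('r list \<Rightarrow> ('u \<times> 'u) set)
    \<Rightarrow> 'r list set \<Rightarrow> 'v itself \<Rightarrow> bool" where
  "alg_tractable M U \<phi> S (_ :: 'v itself) \<longleftrightarrow>
     (\<forall>(E :: 'v set) N. network_over M S E N \<longrightarrow>
        (satisfiable \<phi> U E N \<longleftrightarrow> (\<forall>N'. alg_closure M E N N' \<longrightarrow> \<not> triv_incons M E N')))"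

definition refinement :: "'r malg \<Rightarrow> 'r list set \<Rightarrow> 'r list set \<Rightarrow> ('r list \<Rightarrow> 'r list) \<Rightarrow> bool" where
  "refinement M S S' H \<longleftrightarrow> (\<forall>R \<in> S. H R \<in> S' \<and> rsubseteq M (H R) R \<and>
      (\<not> rtriv M R \<longrightarrow> \<not> rtriv M (H R)))"

definition apply_ref :: "('r list \<Rightarrow> 'r list) \<Rightarrow> ('v \<Rightarrow> 'v \<Rightarrow> 'r list) \<Rightarrow> ('v \<Rightarrow> 'v \<Rightarrow> 'r list)" where
  "apply_ref H N = (\<lambda>x y. H (N x y))"

definition alg_stable :: "'r malg \<Rightarrow> 'r list set \<Rightarrow> ('r list \<Rightarrow> 'r list) \<Rightarrow> 'v itself \<Rightarrow> bool" where
  "alg_stable M S H (_ :: 'v itself) \<longleftrightarrow>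
     (\<forall>(E :: 'v set) N. network_over M S E N \<and> alg_consistent M E N \<longrightarrow>
        alg_consistent M E (apply_ref H N))"

end

theory Submission
  imports Defs
begin

lemma ba_facts_1: "boolean_alg A \<Longrightarrow> finite (carrier A)"
  unfolding boolean_alg_def by metis
lemma ba_facts_2: "boolean_alg A \<Longrightarrow> nalg.bot A \<in> carrier A"
  unfolding boolean_alg_def by metis
lemma ba_facts_3: "boolean_alg A \<Longrightarrow> nalg.top A \<in> carrier A"
  unfolding boolean_alg_def by metis
lemma ba_facts_4: "boolean_alg A \<Longrightarrow> x \<in> carrier A \<Longrightarrow> y \<in> carrier A \<Longrightarrow> join A x y \<in> carrier A"
  unfolding boolean_alg_def by metis
lemma ba_facts_5: "boolean_alg A \<Longrightarrow> x \<in> carrier A \<Longrightarrow> neg A x \<in> carrier A"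
  unfolding boolean_alg_def by metis
lemma ba_facts_6: "boolean_alg A \<Longrightarrow> x \<in> carrier A \<Longrightarrow> y \<in> carrier A \<Longrightarrow> join A x y = join A y x"
  unfolding boolean_alg_def by metis
lemma ba_facts_7: "boolean_alg A \<Longrightarrow> x \<in> carrier A \<Longrightarrow> y \<in> carrier A \<Longrightarrow> meet A x y = meet A y x"
  unfolding boolean_alg_def by metis
lemma ba_facts_8: "boolean_alg A \<Longrightarrow> x \<in> carrier A \<Longrightarrow> y \<in> carrier A \<Longrightarrow> z \<in> carrier A \<Longrightarrow> join A x (join A y z) = join A (join A x y) z"
  unfolding boolean_alg_def by metis
lemma ba_facts_9: "boolean_alg A \<Longrightarrow> x \<in> carrier A \<Longrightarrow> y \<in> carrier A \<Longrightarrow> z \<in> carrier A \<Longrightarrow> meet A x (meet A y z) = meet A (meet A x y) z"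
  unfolding boolean_alg_def by metis
lemma ba_facts_10: "boolean_alg A \<Longrightarrow> x \<in> carrier A \<Longrightarrow> y \<in> carrier A \<Longrightarrow> join A x (meet A x y) = x"
  unfolding boolean_alg_def by metis
lemma ba_facts_11: "boolean_alg A \<Longrightarrow> x \<in> carrier A \<Longrightarrow> y \<in> carrier A \<Longrightarrow> meet A x (join A x y) = x"
  unfolding boolean_alg_def by metis
lemma ba_facts_12: "boolean_alg A \<Longrightarrow> x \<in> carrier A \<Longrightarrow> join A x (neg A x) = nalg.top A"
  unfolding boolean_alg_def by metis
lemma ba_facts_13: "boolean_alg A \<Longrightarrow> x \<in> carrier A \<Longrightarrow> meet A x (neg A x) = nalg.bot A"
  unfolding boolean_alg_def by metis
lemmas ba_facts = ba_facts_1 ba_facts_2 ba_facts_3 ba_facts_4 ba_facts_5 ba_facts_6 ba_facts_7 ba_facts_8 ba_facts_9 ba_facts_10 ba_facts_11 ba_facts_12 ba_facts_13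


lemma meet_carrier: assumes "boolean_alg A" "x \<in> carrier A" "y \<in> carrier A" shows "meet A x y \<in> carrier A"
  unfolding meet_def using ba_facts(4,5)[OF assms(1)] assms(2,3) by simp

lemma bl_antisym: assumes "boolean_alg A" "x \<in> carrier A" "y \<in> carrier A" "le A x y" "le A y x" shows "x = y"
proof -
  have "y = join A x y" using assms(4) unfolding le_def by simp
  also have "\<dots> = join A y x" using ba_facts(6)[OF assms(1,2,3)] .
  also have "\<dots> = x" using assms(5) unfolding le_def by simp
  finally show ?thesis by simp
qed

lemma bl_trans: assumes "boolean_alg A" "x \<in> carrier A" "y \<in> carrier A" "z \<in> carrier A" "le A x y" "le A y z" shows "le A x z"
proof -
  have "join A x z = join A x (join A y z)" using assms(6) unfolding le_def by simp
  also have "\<dots> = join A (join A x y) z" using ba_facts(8)[OF assms(1,2,3,4)] .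
  also have "\<dots> = z" using assms(5,6) unfolding le_def by simp
  finally show ?thesis unfolding le_def .
qed

lemma le_meet_iff: assumes "boolean_alg A" "x \<in> carrier A" "y \<in> carrier A"
  shows "le A x y \<longleftrightarrow> meet A x y = x"
proof
  assume "le A x y" then show "meet A x y = x" unfolding le_def using ba_facts(11)[OF assms] by simp
next
  assume h: "meet A x y = x"
  have "join A y (meet A y x) = y" using ba_facts(10)[OF assms(1,3,2)] .
  moreover have "meet A y x = x" using h ba_facts(7)[OF assms] by simp
  ultimately have "join A y x = y" by simp
  then show "le A x y" unfolding le_def using ba_facts(6)[OF assms] by simp
qed

lemma meet_le1: assumes "boolean_alg A" "x \<in> carrier A" "y \<in> carrier A" shows "le A (meet A x y) x"
  unfolding le_def using ba_facts(6)[OF assms(1) meet_carrier[OF assms] assms(2)] ba_facts(10)[OF assms] by simp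

lemma meet_le2: assumes "boolean_alg A" "x \<in> carrier A" "y \<in> carrier A" shows "le A (meet A x y) y"
  using meet_le1[OF assms(1,3,2)] ba_facts(7)[OF assms] by simp

lemma meet_glb: assumes "boolean_alg A" "a \<in> carrier A" "b \<in> carrier A" "c \<in> carrier A"
  "le A c a" "le A c b" shows "le A c (meet A a b)"
proof -
  have "meet A c (meet A a b) = meet A (meet A c a) b" using ba_facts(9)[OF assms(1,4,2,3)] .
  also have "meet A c a = c" using le_meet_iff[OF assms(1,4,2)] assms(5) by simp
  also have "meet A c b = c" using le_meet_iff[OF assms(1,4,3)] assms(6) by simp
  finally show ?thesis using le_meet_iff[OF assms(1,4) meet_carrier[OF assms(1,2,3)]] by simp
qed

lemma meet_top: assumes "boolean_alg A" "x \<in> carrier A" shows "meet A x (nalg.top A) = x"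
  using ba_facts(11)[OF assms ba_facts(5)[OF assms]] ba_facts(12)[OF assms] by simp

lemma join_bot: assumes "boolean_alg A" "x \<in> carrier A" shows "join A x (nalg.bot A) = x"
  using ba_facts(10)[OF assms ba_facts(5)[OF assms]] ba_facts(13)[OF assms] by simp

lemma le_bot: assumes "boolean_alg A" "x \<in> carrier A" "le A x (nalg.bot A)" shows "x = nalg.bot A"
  using assms(3) join_bot[OF assms(1,2)] unfolding le_def by simp

lemma bl_refl: assumes "boolean_alg A" "x \<in> carrier A" shows "le A x x"
proof -
  have "meet A x x = meet A x (join A x (meet A x x))" using ba_facts(10)[OF assms assms(2)] by simp
  also have "\<dots> = x" using ba_facts(11)[OF assms meet_carrier[OF assms assms(2)]] .
  finally show ?thesis using le_meet_iff[OF assms assms(2)] by simp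
qed

lemma na_facts_1: "nonassoc_alg A \<Longrightarrow> boolean_alg A"
  unfolding nonassoc_alg_def by metis
lemma na_facts_2: "nonassoc_alg A \<Longrightarrow> x \<in> carrier A \<Longrightarrow> conv A x \<in> carrier A"
  unfolding nonassoc_alg_def by metis
lemma na_facts_3: "nonassoc_alg A \<Longrightarrow> x \<in> carrier A \<Longrightarrow> conv A (conv A x) = x"
  unfolding nonassoc_alg_def by metis
lemma na_facts_4: "nonassoc_alg A \<Longrightarrow> x \<in> carrier A \<Longrightarrow> y \<in> carrier A \<Longrightarrow> conv A (join A x y) = join A (conv A x) (conv A y)"
  unfolding nonassoc_alg_def by metis
lemma na_facts_5: "nonassoc_alg A \<Longrightarrow> x \<in> carrier A \<Longrightarrow> y \<in> carrier A \<Longrightarrow> conv A (comp A x y) = comp A (conv A y) (conv A x)"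
  unfolding nonassoc_alg_def by metis
lemma na_facts_6: "nonassoc_alg A \<Longrightarrow> x \<in> carrier A \<Longrightarrow> y \<in> carrier A \<Longrightarrow> comp A x y \<in> carrier A"
  unfolding nonassoc_alg_def by metis
lemmas na_facts = na_facts_1 na_facts_2 na_facts_3 na_facts_4 na_facts_5 na_facts_6


lemma na_ba: "nonassoc_alg A \<Longrightarrow> boolean_alg A" by (rule na_facts(1))
lemma conv_carrier: "nonassoc_alg A \<Longrightarrow> x \<in> carrier A \<Longrightarrow> conv A x \<in> carrier A"
  by (rule na_facts(2))
lemma conv_conv: "nonassoc_alg A \<Longrightarrow> x \<in> carrier A \<Longrightarrow> conv A (conv A x) = x"
  by (rule na_facts(3))
lemma conv_join: "nonassoc_alg A \<Longrightarrow> x \<in> carrier A \<Longrightarrow> y \<in> carrier A \<Longrightarrow> conv A (join A x y) = join A (conv A x) (conv A y)"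
  by (rule na_facts(4))
lemma conv_comp: "nonassoc_alg A \<Longrightarrow> x \<in> carrier A \<Longrightarrow> y \<in> carrier A \<Longrightarrow> conv A (comp A x y) = comp A (conv A y) (conv A x)"
  by (rule na_facts(5))
lemma comp_carrier: "nonassoc_alg A \<Longrightarrow> x \<in> carrier A \<Longrightarrow> y \<in> carrier A \<Longrightarrow> comp A x y \<in> carrier A"
  by (rule na_facts(6))

lemma conv_mono: assumes "nonassoc_alg A" "x \<in> carrier A" "y \<in> carrier A" "le A x y" shows "le A (conv A x) (conv A y)"
  using assms(4) conv_join[OF assms(1,2,3)] unfolding le_def by simp

lemma conv_meet: assumes "nonassoc_alg A" "x \<in> carrier A" "y \<in> carrier A"
  shows "conv A (meet A x y) = meet A (conv A x) (conv A y)"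
proof -
  have B: "boolean_alg A" using na_ba[OF assms(1)] .
  have m: "meet A x y \<in> carrier A" using meet_carrier[OF B assms(2,3)] .
  have cx: "conv A x \<in> carrier A" using conv_carrier[OF assms(1,2)] .
  have cy: "conv A y \<in> carrier A" using conv_carrier[OF assms(1,3)] .
  have cm: "conv A (meet A x y) \<in> carrier A" using conv_carrier[OF assms(1) m] .
  have d: "meet A (conv A x) (conv A y) \<in> carrier A" using meet_carrier[OF B cx cy] .
  have cd: "conv A (meet A (conv A x) (conv A y)) \<in> carrier A" using conv_carrier[OF assms(1) d] .
  have 1: "le A (conv A (meet A x y)) (meet A (conv A x) (conv A y))"
    apply (rule meet_glb[OF B cx cy cm])
    using conv_mono[OF assms(1) m assms(2) meet_le1[OF B assms(2,3)]]
      conv_mono[OF assms(1) m assms(3) meet_le2[OF B assms(2,3)]] by auto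
  have 3: "le A (conv A (meet A (conv A x) (conv A y))) (meet A x y)"
    apply (rule meet_glb[OF B assms(2,3) cd])
    using conv_mono[OF assms(1) d cx meet_le1[OF B cx cy]]
      conv_mono[OF assms(1) d cy meet_le2[OF B cx cy]] conv_conv[OF assms(1) assms(2)] conv_conv[OF assms(1) assms(3)] by auto
  have 2: "le A (meet A (conv A x) (conv A y)) (conv A (meet A x y))"
    using conv_mono[OF assms(1) cd m 3] conv_conv[OF assms(1) d] by simp
  show ?thesis using bl_antisym[OF B cm d 1 2] .
qed


lemma ma_na: "multi_alg M \<Longrightarrow> i < dim M \<Longrightarrow> nonassoc_alg (alg M i)"
  unfolding multi_alg_def by blast
lemma ma_ba: "multi_alg M \<Longrightarrow> i < dim M \<Longrightarrow> boolean_alg (alg M i)"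
  using ma_na na_ba by blast
lemma ma_proj: "multi_alg M \<Longrightarrow> i < dim M \<Longrightarrow> j < dim M \<Longrightarrow> i \<noteq> j \<Longrightarrow> x \<in> carrier (alg M i)
   \<Longrightarrow> proj M i j x \<in> carrier (alg M j)"
  unfolding multi_alg_def by blast
lemma ma_proj_conv: "multi_alg M \<Longrightarrow> i < dim M \<Longrightarrow> j < dim M \<Longrightarrow> i \<noteq> j \<Longrightarrow> x \<in> carrier (alg M i)
   \<Longrightarrow> proj M i j (conv (alg M i) x) = conv (alg M j) (proj M i j x)"
  unfolding multi_alg_def by blast

lemma relsI: "length R = dim M \<Longrightarrow> (\<And>i. i < dim M \<Longrightarrow> R ! i \<in> carrier (alg M i)) \<Longrightarrow> R \<in> rels M"
  unfolding rels_def by blast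
lemma relsD: "R \<in> rels M \<Longrightarrow> length R = dim M" "R \<in> rels M \<Longrightarrow> i < dim M \<Longrightarrow> R ! i \<in> carrier (alg M i)"
  unfolding rels_def by blast+

lemma rinter_nth[simp]: "i < dim M \<Longrightarrow> rinter M R R' ! i = meet (alg M i) (R ! i) (R' ! i)"
  unfolding rinter_def by simp
lemma rcomp_nth[simp]: "i < dim M \<Longrightarrow> rcomp M R R' ! i = comp (alg M i) (R ! i) (R' ! i)"
  unfolding rcomp_def by simp
lemma rconv_nth[simp]: "i < dim M \<Longrightarrow> rconv M R ! i = conv (alg M i) (R ! i)"
  unfolding rconv_def by simp
lemma runiv_nth[simp]: "i < dim M \<Longrightarrow> runiv M ! i = nalg.top (alg M i)"
  unfolding runiv_def by simp
lemma len_simps[simp]: "length (rinter M R R') = dim M" "length (rcomp M R R') = dim M"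
  "length (rconv M R) = dim M" "length (runiv M) = dim M"
  unfolding rinter_def rcomp_def rconv_def runiv_def by simp_all

lemma rinter_rels: "multi_alg M \<Longrightarrow> R \<in> rels M \<Longrightarrow> R' \<in> rels M \<Longrightarrow> rinter M R R' \<in> rels M"
  by (rule relsI) (auto intro: meet_carrier ma_ba relsD)
lemma rcomp_rels: "multi_alg M \<Longrightarrow> R \<in> rels M \<Longrightarrow> R' \<in> rels M \<Longrightarrow> rcomp M R R' \<in> rels M"
  by (rule relsI) (auto intro: comp_carrier ma_na relsD)
lemma rconv_rels: "multi_alg M \<Longrightarrow> R \<in> rels M \<Longrightarrow> rconv M R \<in> rels M"
  by (rule relsI) (auto intro: conv_carrier ma_na relsD)
lemma runiv_rels: "multi_alg M \<Longrightarrow> runiv M \<in> rels M"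
  by (rule relsI) (auto intro: ba_facts ma_ba)

lemma rels_eqI: "R \<in> rels M \<Longrightarrow> R' \<in> rels M \<Longrightarrow> (\<And>i. i < dim M \<Longrightarrow> R ! i = R' ! i) \<Longrightarrow> R = R'"
  by (metis nth_equalityI relsD(1))

lemma rconv_rconv: assumes "multi_alg M" "R \<in> rels M" shows "rconv M (rconv M R) = R"
proof (rule rels_eqI)
  fix i assume i: "i < dim M"
  show "rconv M (rconv M R) ! i = R ! i"
    using i conv_conv[OF ma_na[OF assms(1) i] relsD(2)[OF assms(2) i]] by simp
qed (auto intro: rconv_rels assms)

lemma rconv_rinter: assumes "multi_alg M" "R \<in> rels M" "R' \<in> rels M"
  shows "rconv M (rinter M R R') = rinter M (rconv M R) (rconv M R')"
proof (rule rels_eqI)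
  fix i assume i: "i < dim M"
  show "rconv M (rinter M R R') ! i = rinter M (rconv M R) (rconv M R') ! i"
    using i conv_meet[OF ma_na[OF assms(1) i] relsD(2)[OF assms(2) i] relsD(2)[OF assms(3) i]] by simp
qed (auto intro: rconv_rels rinter_rels assms)

lemma rconv_rcomp: assumes "multi_alg M" "R \<in> rels M" "R' \<in> rels M"
  shows "rconv M (rcomp M R R') = rcomp M (rconv M R') (rconv M R)"
proof (rule rels_eqI)
  fix i assume i: "i < dim M"
  show "rconv M (rcomp M R R') ! i = rcomp M (rconv M R') (rconv M R) ! i"
    using i conv_comp[OF ma_na[OF assms(1) i] relsD(2)[OF assms(2) i] relsD(2)[OF assms(3) i]] by simp
qed (auto intro: rconv_rels rcomp_rels assms)

lemma rinter_comm: assumes "multi_alg M" "R \<in> rels M" "R' \<in> rels M"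
  shows "rinter M R R' = rinter M R' R"
proof (rule rels_eqI)
  fix i assume i: "i < dim M"
  show "rinter M R R' ! i = rinter M R' R ! i"
    using i ba_facts(7)[OF ma_ba[OF assms(1) i] relsD(2)[OF assms(2) i] relsD(2)[OF assms(3) i]] by simp
qed (auto intro: rinter_rels assms)

lemma rinter_le: "multi_alg M \<Longrightarrow> R \<in> rels M \<Longrightarrow> R' \<in> rels M \<Longrightarrow> rsubseteq M R R' \<Longrightarrow> rinter M R R' = R"
  unfolding rsubseteq_def
  by (rule rels_eqI) (auto intro: rinter_rels relsD simp: le_meet_iff ma_ba relsD)

lemma rinter_univ: "multi_alg M \<Longrightarrow> R \<in> rels M \<Longrightarrow> rinter M R (runiv M) = R"
  by (rule rels_eqI) (auto intro: rinter_rels runiv_rels relsD simp: meet_top ma_ba relsD)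

lemma rinter_le1: "multi_alg M \<Longrightarrow> R \<in> rels M \<Longrightarrow> R' \<in> rels M \<Longrightarrow> rsubseteq M (rinter M R R') R"
  unfolding rsubseteq_def by (auto intro: meet_le1 ma_ba relsD)

lemma rsub_trans: "multi_alg M \<Longrightarrow> R1 \<in> rels M \<Longrightarrow> R2 \<in> rels M \<Longrightarrow> R3 \<in> rels M \<Longrightarrow> rsubseteq M R1 R2 \<Longrightarrow> rsubseteq M R2 R3 \<Longrightarrow> rsubseteq M R1 R3"
  unfolding rsubseteq_def by (meson bl_trans ma_ba relsD(2))
lemma rsub_refl: "multi_alg M \<Longrightarrow> R \<in> rels M \<Longrightarrow> rsubseteq M R R"
  unfolding rsubseteq_def by (meson bl_refl ma_ba relsD(2))
lemma rsub_antisym: "multi_alg M \<Longrightarrow> R1 \<in> rels M \<Longrightarrow> R2 \<in> rels M \<Longrightarrow> rsubseteq M R1 R2 \<Longrightarrow> rsubseteq M R2 R1 \<Longrightarrow> R1 = R2"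
  unfolding rsubseteq_def by (meson bl_antisym ma_ba relsD(2) rels_eqI)
lemma rconv_mono: "multi_alg M \<Longrightarrow> R1 \<in> rels M \<Longrightarrow> R2 \<in> rels M \<Longrightarrow> rsubseteq M R1 R2 \<Longrightarrow> rsubseteq M (rconv M R1) (rconv M R2)"
  unfolding rsubseteq_def by (simp add: conv_mono ma_na relsD(2))


definition gm :: "'r malg \<Rightarrow> 'r list \<Rightarrow> nat" where
  "gm M R = (\<Sum>i<dim M. card {c \<in> carrier (alg M i). le (alg M i) c (R ! i)})"

lemma le_set_mono: assumes "boolean_alg A" "a \<in> carrier A" "b \<in> carrier A" "le A a b"
  shows "{c \<in> carrier A. le A c a} \<subseteq> {c \<in> carrier A. le A c b}"
proof
  fix c assume "c \<in> {c \<in> carrier A. le A c a}"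
  then have c: "c \<in> carrier A" "le A c a" by auto
  show "c \<in> {c \<in> carrier A. le A c b}" using bl_trans[OF assms(1) c(1) assms(2,3) c(2) assms(4)] c(1) by simp
qed

lemma card_le_mono: assumes "multi_alg M" "R \<in> rels M" "R' \<in> rels M" "rsubseteq M R' R" "i < dim M"
  shows "card {c \<in> carrier (alg M i). le (alg M i) c (R' ! i)} \<le> card {c \<in> carrier (alg M i). le (alg M i) c (R ! i)}"
proof (rule card_mono)
  have B: "boolean_alg (alg M i)" using ma_ba[OF assms(1,5)] .
  show "finite {c \<in> carrier (alg M i). le (alg M i) c (R ! i)}" using ba_facts(1)[OF B] by simp
  show "{c \<in> carrier (alg M i). le (alg M i) c (R' ! i)} \<subseteq> {c \<in> carrier (alg M i). le (alg M i) c (R ! i)}"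
    apply (rule le_set_mono[OF B relsD(2)[OF assms(3,5)] relsD(2)[OF assms(2,5)]])
    using assms(4,5) unfolding rsubseteq_def by blast
qed

lemma gm_mono: assumes "multi_alg M" "R \<in> rels M" "R' \<in> rels M" "rsubseteq M R' R"
  shows "gm M R' \<le> gm M R"
  unfolding gm_def
proof (rule sum_mono)
  fix i assume "i \<in> {..<dim M}"
  then have i: "i < dim M" by simp
  show "card {c \<in> carrier (alg M i). le (alg M i) c (R' ! i)} \<le> card {c \<in> carrier (alg M i). le (alg M i) c (R ! i)}"
    using card_le_mono[OF assms i] .
qed

lemma gm_less: assumes "multi_alg M" "R \<in> rels M" "R' \<in> rels M" "rsubseteq M R' R" "R' \<noteq> R"
  shows "gm M R' < gm M R"
proof -
  obtain i where i: "i < dim M" "R' ! i \<noteq> R ! i" using assms(2,3,5) rels_eqI by metis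
  have B: "boolean_alg (alg M i)" using ma_ba[OF assms(1) i(1)] .
  show ?thesis unfolding gm_def
  proof (rule sum_strict_mono_ex1)
    show "finite {..<dim M}" by simp
    show "\<forall>x\<in>{..<dim M}. card {c \<in> carrier (alg M x). le (alg M x) c (R' ! x)} \<le> card {c \<in> carrier (alg M x). le (alg M x) c (R ! x)}"
      using card_le_mono[OF assms(1-4)] by simp
    show "\<exists>a\<in>{..<dim M}. card {c \<in> carrier (alg M a). le (alg M a) c (R' ! a)} < card {c \<in> carrier (alg M a). le (alg M a) c (R ! a)}"
    proof (intro bexI psubset_card_mono)
      show "i \<in> {..<dim M}" using i by simp
      show "finite {c \<in> carrier (alg M i). le (alg M i) c (R ! i)}" using ba_facts(1)[OF B] by simp
      have r: "R ! i \<in> carrier (alg M i)" "R' ! i \<in> carrier (alg M i)" using relsD(2)[OF assms(2) i(1)] relsD(2)[OF assms(3) i(1)] by auto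
      have l: "le (alg M i) (R' ! i) (R ! i)" using assms(4) i unfolding rsubseteq_def by blast
      have "R ! i \<notin> {c \<in> carrier (alg M i). le (alg M i) c (R' ! i)}"
        using bl_antisym[OF B r(2) r(1) l] i(2) by auto
      moreover have "R ! i \<in> {c \<in> carrier (alg M i). le (alg M i) c (R ! i)}" using bl_refl[OF B r(1)] r by auto
      moreover have "{c \<in> carrier (alg M i). le (alg M i) c (R' ! i)} \<subseteq> {c \<in> carrier (alg M i). le (alg M i) c (R ! i)}"
        using le_set_mono[OF B r(2) r(1) l] .
      ultimately show "{c \<in> carrier (alg M i). le (alg M i) c (R' ! i)} \<subset> {c \<in> carrier (alg M i). le (alg M i) c (R ! i)}"
        by blast
    qed
  qed
qed

lemma proj_step_props: assumes "multi_alg M" "R \<in> rels M" "proj_step M R R1"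
  shows "R1 \<in> rels M" "rsubseteq M R1 R" "proj_step M (rconv M R) (rconv M R1)"
proof -
  obtain i j where ij: "i < dim M" "j < dim M" "i \<noteq> j"
    and R1: "R1 = R[j := meet (alg M j) (R ! j) (proj M i j (R ! i))]"
    using assms(3) unfolding proj_step_def by blast
  have ri: "R ! i \<in> carrier (alg M i)" using relsD(2)[OF assms(2) ij(1)] .
  have rj: "R ! j \<in> carrier (alg M j)" using relsD(2)[OF assms(2) ij(2)] .
  have p: "proj M i j (R ! i) \<in> carrier (alg M j)" using ma_proj[OF assms(1) ij ri] .
  have len: "length R = dim M" using relsD(1)[OF assms(2)] .
  have mc: "meet (alg M j) (R ! j) (proj M i j (R ! i)) \<in> carrier (alg M j)"
    using meet_carrier[OF ma_ba[OF assms(1) ij(2)] rj p] .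
  show r1: "R1 \<in> rels M" unfolding R1
  proof (rule relsI)
    show "length (R[j := meet (alg M j) (R ! j) (proj M i j (R ! i))]) = dim M" using len by simp
    fix k assume k: "k < dim M"
    show "R[j := meet (alg M j) (R ! j) (proj M i j (R ! i))] ! k \<in> carrier (alg M k)"
    proof (cases "k = j")
      case True then show ?thesis using mc len k by simp
    next
      case False then show ?thesis using relsD(2)[OF assms(2) k] by simp
    qed
  qed
  show "rsubseteq M R1 R" unfolding rsubseteq_def R1
  proof (intro allI impI)
    fix k assume k: "k < dim M"
    show "le (alg M k) (R[j := meet (alg M j) (R ! j) (proj M i j (R ! i))] ! k) (R ! k)"
      using meet_le1[OF ma_ba[OF assms(1) ij(2)] rj p] bl_refl[OF ma_ba[OF assms(1) k] relsD(2)[OF assms(2) k]] len ij(2)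
      by (cases "k = j") auto
  qed
  have eq: "rconv M R1 = (rconv M R)[j := meet (alg M j) (rconv M R ! j) (proj M i j (rconv M R ! i))]"
  proof (rule nth_equalityI)
    show "length (rconv M R1) = length ((rconv M R)[j := meet (alg M j) (rconv M R ! j) (proj M i j (rconv M R ! i))])"
      by simp
    fix k assume "k < length (rconv M R1)"
    then have k: "k < dim M" by simp
    show "rconv M R1 ! k = (rconv M R)[j := meet (alg M j) (rconv M R ! j) (proj M i j (rconv M R ! i))] ! k"
    proof (cases "k = j")
      case True
      then show ?thesis using k ij len R1 conv_meet[OF ma_na[OF assms(1) ij(2)] rj p]
          ma_proj_conv[OF assms(1) ij ri] by simp
    next
      case False
      then show ?thesis using k R1 by simp
    qed
  qed
  show "proj_step M (rconv M R) (rconv M R1)" unfolding proj_step_def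
    by (rule exI[of _ i], rule conjI[OF ij(1)], rule exI[of _ j], rule conjI[OF ij(2)], rule conjI[OF ij(3)]) (rule eq)
qed

lemma proj_steps_props: assumes "multi_alg M" "(proj_step M)\<^sup>*\<^sup>* R R1" "R \<in> rels M"
  shows "R1 \<in> rels M \<and> rsubseteq M R1 R \<and> (proj_step M)\<^sup>*\<^sup>* (rconv M R) (rconv M R1)"
  using assms(2,3)
proof (induction rule: rtranclp_induct)
  case base
  then show ?case using rsub_refl assms(1) by auto
next
  case (step y z)
  then have y: "y \<in> rels M" "rsubseteq M y R" "(proj_step M)\<^sup>*\<^sup>* (rconv M R) (rconv M y)" by auto
  note pp = proj_step_props[OF assms(1) y(1) step(2)]
  have "(proj_step M)\<^sup>*\<^sup>* (rconv M R) (rconv M z)" using y(3) pp(3) by (rule rtranclp.rtrancl_into_rtrancl)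
  then show ?case using pp(1) rsub_trans[OF assms(1) pp(1) y(1) step(4) pp(2) y(2)] by simp
qed

lemma proj_closed_rconv: assumes "multi_alg M" "R \<in> rels M" "proj_closed M R"
  shows "proj_closed M (rconv M R)"
  unfolding proj_closed_def
proof (intro allI impI)
  fix i j assume ij: "i < dim M" "j < dim M" "i \<noteq> j"
  have ri: "R ! i \<in> carrier (alg M i)" and rj: "R ! j \<in> carrier (alg M j)" using assms(2) ij relsD by blast+
  have "le (alg M j) (R ! j) (proj M i j (R ! i))" using assms(3) ij unfolding proj_closed_def by blast
  then show "le (alg M j) (rconv M R ! j) (proj M i j (rconv M R ! i))"
    using conv_mono[OF ma_na[OF assms(1) ij(2)] rj ma_proj[OF assms(1) ij ri]] ma_proj_conv[OF assms(1) ij ri] ij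
    by simp
qed

lemma proj_closure_props: assumes "multi_alg M" "R \<in> rels M" "proj_closure M R R1"
  shows "R1 \<in> rels M" "rsubseteq M R1 R" "proj_closure M (rconv M R) (rconv M R1)"
proof -
  have st: "(proj_step M)\<^sup>*\<^sup>* R R1" and pc: "proj_closed M R1" using assms(3) unfolding proj_closure_def by auto
  note h = proj_steps_props[OF assms(1) st assms(2)]
  show "R1 \<in> rels M" using h by simp
  show "rsubseteq M R1 R" using h by simp
  show "proj_closure M (rconv M R) (rconv M R1)" unfolding proj_closure_def
    using h proj_closed_rconv[OF assms(1) _ pc] by simp
qed

lemma proj_closure_exists: assumes "multi_alg M" "R \<in> rels M"
  shows "\<exists>R'. proj_closure M R R'"
  using assms(2)
proof (induction "gm M R" arbitrary: R rule: less_induct)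
  case less
  show ?case
  proof (cases "proj_closed M R")
    case True
    then show ?thesis unfolding proj_closure_def by blast
  next
    case False
    then obtain i j where ij: "i < dim M" "j < dim M" "i \<noteq> j" and nl: "\<not> le (alg M j) (R ! j) (proj M i j (R ! i))"
      unfolding proj_closed_def by blast
    define R1 where "R1 = R[j := meet (alg M j) (R ! j) (proj M i j (R ! i))]"
    have st: "proj_step M R R1" unfolding proj_step_def R1_def
      by (rule exI[of _ i], rule conjI[OF ij(1)], rule exI[of _ j], rule conjI[OF ij(2)], rule conjI[OF ij(3)]) (rule refl)
    note pp = proj_step_props[OF assms(1) less(2) st]
    have rj: "R ! j \<in> carrier (alg M j)" using relsD(2)[OF less(2) ij(2)] .
    have p: "proj M i j (R ! i) \<in> carrier (alg M j)" using ma_proj[OF assms(1) ij relsD(2)[OF less(2) ij(1)]] .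
    have ne: "meet (alg M j) (R ! j) (proj M i j (R ! i)) \<noteq> R ! j"
      using nl le_meet_iff[OF ma_ba[OF assms(1) ij(2)] rj p] by simp
    have "R1 ! j \<noteq> R ! j" unfolding R1_def using relsD(1)[OF less(2)] ij(2) ne by simp
    then have "R1 \<noteq> R" by metis
    then have "gm M R1 < gm M R" using gm_less[OF assms(1) less(2) pp(1) pp(2)] by simp
    then obtain R' where R': "proj_closure M R1 R'" using less(1)[OF _ pp(1)] by auto
    have "(proj_step M)\<^sup>*\<^sup>* R R'" using st R' unfolding proj_closure_def
      by (simp add: converse_rtranclp_into_rtranclp)
    then show ?thesis using R' unfolding proj_closure_def by blast
  qed
qed


lemma Fo_1: "seq_formalism M U \<phi> \<Longrightarrow> multi_alg M"
  unfolding seq_formalism_def by (elim conjE) assumption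
lemma F_1: "seq_formalism M U \<phi> \<Longrightarrow> multi_alg M"
  using Fo_1[of M U \<phi>] by simp
lemma Fo_2: "seq_formalism M U \<phi> \<Longrightarrow> \<forall>R \<in> rels M. \<phi> R \<subseteq> U \<times> U"
  unfolding seq_formalism_def by (elim conjE) assumption
lemma F_2: "seq_formalism M U \<phi> \<Longrightarrow> R \<in> rels M \<Longrightarrow> \<phi> R \<subseteq> U \<times> U"
  using Fo_2[of M U \<phi>] by blast
lemma Fo_3: "seq_formalism M U \<phi> \<Longrightarrow> \<forall>R \<in> rels M. \<forall>R'. proj_closure M R R' \<longrightarrow> \<phi> R' = \<phi> R"
  unfolding seq_formalism_def by (elim conjE) assumption
lemma F_3: "seq_formalism M U \<phi> \<Longrightarrow> R \<in> rels M \<Longrightarrow> proj_closure M R R' \<Longrightarrow> \<phi> R' = \<phi> R"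
  using Fo_3[of M U \<phi>] by blast
lemma Fo_4: "seq_formalism M U \<phi> \<Longrightarrow> \<forall>R \<in> rels M. \<phi> (rconv M R) = (\<phi> R)\<inverse>"
  unfolding seq_formalism_def by (elim conjE) assumption
lemma F_4: "seq_formalism M U \<phi> \<Longrightarrow> R \<in> rels M \<Longrightarrow> \<phi> (rconv M R) = (\<phi> R)\<inverse>"
  using Fo_4[of M U \<phi>] by blast
lemma Fo_5: "seq_formalism M U \<phi> \<Longrightarrow> \<forall>R \<in> rels M. \<forall>R' \<in> rels M. (\<phi> R O \<phi> R') \<inter> \<phi> (runiv M) \<subseteq> \<phi> (rcomp M R R')"
  unfolding seq_formalism_def by (elim conjE) assumption
lemma F_5: "seq_formalism M U \<phi> \<Longrightarrow> R \<in> rels M \<Longrightarrow> R' \<in> rels M \<Longrightarrow> (\<phi> R O \<phi> R') \<inter> \<phi> (runiv M) \<subseteq> \<phi> (rcomp M R R')"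
  using Fo_5[of M U \<phi>] by blast
lemma Fo_6: "seq_formalism M U \<phi> \<Longrightarrow> \<forall>R \<in> rels M. \<forall>R' \<in> rels M. \<phi> (rinter M R R') = \<phi> R \<inter> \<phi> R'"
  unfolding seq_formalism_def by (elim conjE) assumption
lemma F_6: "seq_formalism M U \<phi> \<Longrightarrow> R \<in> rels M \<Longrightarrow> R' \<in> rels M \<Longrightarrow> \<phi> (rinter M R R') = \<phi> R \<inter> \<phi> R'"
  using Fo_6[of M U \<phi>] by blast
lemma Fo_7: "seq_formalism M U \<phi> \<Longrightarrow> \<forall>R \<in> rels M. \<phi> R = (\<Union>B \<in> {B. rbasic M B \<and> rsubseteq M B R}. \<phi> B)"
  unfolding seq_formalism_def by (elim conjE) assumption
lemma F_7: "seq_formalism M U \<phi> \<Longrightarrow> R \<in> rels M \<Longrightarrow> \<phi> R = (\<Union>B \<in> {B. rbasic M B \<and> rsubseteq M B R}. \<phi> B)"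
  using Fo_7[of M U \<phi>] by blast
lemmas F_facts = F_1 F_2 F_3 F_4 F_5 F_6 F_7

lemma rtriv_empty: assumes "seq_formalism M U \<phi>" "R \<in> rels M" "rtriv M R"
  shows "\<phi> R = {}"
proof -
  have MA: "multi_alg M" using F_facts(1)[OF assms(1)] .
  obtain i where i: "i < dim M" "R ! i = nalg.bot (alg M i)" using assms(3) unfolding rtriv_def by blast
  have e: "{B. rbasic M B \<and> rsubseteq M B R} = {}"
  proof (rule ccontr)
    assume "{B. rbasic M B \<and> rsubseteq M B R} \<noteq> {}"
    then obtain B where B: "rbasic M B" "rsubseteq M B R" by blast
    have at: "is_atom (alg M i) (B ! i)" using B(1) i unfolding rbasic_def by blast
    have "le (alg M i) (B ! i) (nalg.bot (alg M i))" using B(2) i unfolding rsubseteq_def by auto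
    then have "B ! i = nalg.bot (alg M i)" using le_bot[OF ma_ba[OF MA i(1)]] at unfolding is_atom_def by blast
    then show False using at unfolding is_atom_def by blast
  qed
  show ?thesis by (subst F_facts(7)[OF assms(1,2)]) (simp only: e, simp)
qed

lemma phi_le: assumes "seq_formalism M U \<phi>" "R \<in> rels M" "R' \<in> rels M" "rsubseteq M R R'"
  shows "\<phi> R \<subseteq> \<phi> R'"
proof -
  have MA: "multi_alg M" using F_facts(1)[OF assms(1)] .
  have "\<phi> R = \<phi> (rinter M R R')" using rinter_le[OF MA assms(2-4)] by simp
  also have "\<dots> = \<phi> R \<inter> \<phi> R'" using F_facts(6)[OF assms(1,2,3)] .
  finally show ?thesis by blast
qed

lemma rinter_eq_le: "multi_alg M \<Longrightarrow> R \<in> rels M \<Longrightarrow> R' \<in> rels M \<Longrightarrow> rinter M R R' = R \<Longrightarrow> rsubseteq M R R'"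
  unfolding rsubseteq_def by (metis le_meet_iff ma_ba relsD(2) rinter_nth)

lemma netD: assumes "network_over M T E N" "a \<in> E" "b \<in> E" "a \<noteq> b"
  shows "N a b \<in> T" "N b a = rconv M (N a b)"
proof -
  have h: "\<forall>x \<in> E. \<forall>y \<in> E. x \<noteq> y \<longrightarrow> N x y \<in> T \<and> N y x = rconv M (N x y)"
    using assms(1) unfolding network_over_def by (elim conjE) assumption
  have "N a b \<in> T \<and> N b a = rconv M (N a b)" using mp[OF bspec[OF bspec[OF h assms(2)] assms(3)] assms(4)] .
  then show "N a b \<in> T" "N b a = rconv M (N a b)" by (rule conjunct1, rule conjunct2)
qed

lemma netFin: "network_over M T E N \<Longrightarrow> finite E" unfolding network_over_def by (rule conjunct1)

lemma network_over_mono: assumes "network_over M T E N" "T \<subseteq> T'" shows "network_over M T' E N"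
  using assms unfolding network_over_def by (meson subsetD)

lemma upd_net_simps1: "x \<noteq> z \<Longrightarrow> upd_net M N x z R x z = R"
  unfolding upd_net_def by simp
lemma upd_net_simps2: "x \<noteq> z \<Longrightarrow> upd_net M N x z R z x = rconv M R"
  unfolding upd_net_def by simp
lemma upd_net_simps3: assumes "\<not> (a = x \<and> b = z)" "\<not> (a = z \<and> b = x)" shows "upd_net M N x z R a b = N a b"
proof -
  have "upd_net M N x z R a b = (if a = x \<and> b = z then R else if a = z \<and> b = x then rconv M R else N a b)"
    unfolding upd_net_def by (rule refl)
  also have "\<dots> = N a b" using assms by (simp only: if_False)
  finally show ?thesis .
qed
lemmas upd_net_simps = upd_net_simps1 upd_net_simps2 upd_net_simps3

lemma upd_network: assumes "multi_alg M" "T \<subseteq> rels M" "network_over M T E N" "x \<in> E" "z \<in> E" "x \<noteq> z"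
  "R \<in> T" "rconv M R \<in> T"
  shows "network_over M T E (upd_net M N x z R)"
  unfolding network_over_def
proof (intro conjI ballI impI)
  show "finite E" using assms(3) unfolding network_over_def by blast
  have R: "R \<in> rels M" using assms(2,7) by blast
  have n: "\<And>a b. a \<in> E \<Longrightarrow> b \<in> E \<Longrightarrow> a \<noteq> b \<Longrightarrow> N a b \<in> T \<and> N b a = rconv M (N a b)"
    using assms(3) unfolding network_over_def by blast
  fix a b assume ab: "a \<in> E" "b \<in> E" "a \<noteq> b"
  have "upd_net M N x z R a b \<in> T \<and> upd_net M N x z R b a = rconv M (upd_net M N x z R a b)"
  proof (cases "a = x \<and> b = z")
    case True
    then show ?thesis using upd_net_simps1[OF assms(6), of M N R] upd_net_simps2[OF assms(6), of M N R] assms(7) by auto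
  next
    case F1: False
    show ?thesis
    proof (cases "a = z \<and> b = x")
      case True
      then show ?thesis using upd_net_simps1[OF assms(6), of M N R] upd_net_simps2[OF assms(6), of M N R] assms(8)
        rconv_rconv[OF assms(1) R] by auto
    next
      case False
      have "upd_net M N x z R a b = N a b" using upd_net_simps3[OF F1 False] .
      moreover have "upd_net M N x z R b a = N b a" using upd_net_simps3[of b x a z M N R] F1 False by blast
      ultimately show ?thesis using n[OF ab] by simp
    qed
  qed
  then show "upd_net M N x z R a b \<in> T" "upd_net M N x z R b a = rconv M (upd_net M N x z R a b)" by auto
qed

lemma proj_case_T: assumes "multi_alg M" "T \<subseteq> rels M" "projection_closed_set M T"
  "network_over M T E N" "x \<in> E" "z \<in> E" "x \<noteq> z" "proj_closure M (N x z) R"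
  shows "network_over M T E (upd_net M N x z R)"
proof -
  have T1: "N x z \<in> T" and T2: "N z x = rconv M (N x z)" using netD[OF assms(4-7)] by auto
  have T3: "N z x \<in> T" using netD(1)[OF assms(4,6,5)] assms(7) by auto
  have r: "N x z \<in> rels M" using T1 assms(2) by blast
  have R: "R \<in> T" using assms(3) T1 assms(8) unfolding projection_closed_set_def by blast
  have pc2: "proj_closure M (N z x) (rconv M R)" using proj_closure_props(3)[OF assms(1) r assms(8)] T2 by simp
  have "rconv M R \<in> T" using assms(3) T3 pc2 unfolding projection_closed_set_def by blast
  then show ?thesis using upd_network[OF assms(1,2,4-7) R] by blast
qed

lemma comp_case_T: assumes "multi_alg M" "T \<subseteq> rels M" "compinter_closed M T"
  "network_over M T E N" "x \<in> E" "y \<in> E" "z \<in> E" "x \<noteq> y" "y \<noteq> z" "x \<noteq> z"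
  shows "network_over M T E (upd_net M N x z (rinter M (N x z) (rcomp M (N x y) (N y z))))"
proof -
  have txz: "N x z \<in> T" using netD(1)[OF assms(4,5,7,10)] .
  have txy: "N x y \<in> T" using netD(1)[OF assms(4,5,6,8)] .
  have tyz: "N y z \<in> T" using netD(1)[OF assms(4,6,7,9)] .
  have zx: "N z x = rconv M (N x z)" using netD(2)[OF assms(4,5,7,10)] .
  have yx: "N y x = rconv M (N x y)" using netD(2)[OF assms(4,5,6,8)] .
  have zy: "N z y = rconv M (N y z)" using netD(2)[OF assms(4,6,7,9)] .
  have tzx: "N z x \<in> T" using netD(1)[OF assms(4,7,5)] assms(10) by auto
  have tyx: "N y x \<in> T" using netD(1)[OF assms(4,6,5)] assms(8) by auto
  have tzy: "N z y \<in> T" using netD(1)[OF assms(4,7,6)] assms(9) by auto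
  have rxz: "N x z \<in> rels M" using txz assms(2) by blast
  have rxy: "N x y \<in> rels M" using txy assms(2) by blast
  have ryz: "N y z \<in> rels M" using tyz assms(2) by blast
  have cc: "\<And>A B C. A \<in> T \<Longrightarrow> B \<in> T \<Longrightarrow> C \<in> T \<Longrightarrow> rinter M (rcomp M A B) C \<in> T"
    using assms(3) unfolding compinter_closed_def by blast
  have c1: "rcomp M (N x y) (N y z) \<in> rels M" using rcomp_rels[OF assms(1) rxy ryz] .
  have 1: "rinter M (N x z) (rcomp M (N x y) (N y z)) \<in> T"
    using rinter_comm[OF assms(1) rxz c1] cc[OF txy tyz txz] by simp
  have rzx: "N z x \<in> rels M" using tzx assms(2) by blast
  have rzy: "N z y \<in> rels M" using tzy assms(2) by blast
  have ryx: "N y x \<in> rels M" using tyx assms(2) by blast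
  have "rconv M (rinter M (N x z) (rcomp M (N x y) (N y z))) = rinter M (rconv M (N x z)) (rcomp M (rconv M (N y z)) (rconv M (N x y)))"
    using rconv_rinter[OF assms(1) rxz c1] rconv_rcomp[OF assms(1) rxy ryz] by simp
  also have "\<dots> = rinter M (N z x) (rcomp M (N z y) (N y x))" using zx zy yx by simp
  also have "\<dots> = rinter M (rcomp M (N z y) (N y x)) (N z x)"
    using rinter_comm[OF assms(1) rzx rcomp_rels[OF assms(1) rzy ryx]] .
  finally have 2: "rconv M (rinter M (N x z) (rcomp M (N x y) (N y z))) \<in> T" using cc[OF tzy tyx tzx] by simp
  show ?thesis using upd_network[OF assms(1,2,4,5,7,10) 1 2] .
qed

lemma step_network: assumes "multi_alg M" "T \<subseteq> rels M" "projection_closed_set M T" "compinter_closed M T"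
  "network_over M T E N" "alg_step M E N N'"
  shows "network_over M T E N'"
  using assms(6) unfolding alg_step_def
proof (elim disjE bexE exE conjE)
  fix x z R assume xz: "x \<in> E" "z \<in> E" "x \<noteq> z" and pc: "proj_closure M (N x z) R" and N': "N' = upd_net M N x z R"
  show ?thesis unfolding N' using proj_case_T[OF assms(1,2,3,5) xz pc] .
next
  fix x y z assume xyz: "x \<in> E" "y \<in> E" "z \<in> E" "x \<noteq> y" "y \<noteq> z" "x \<noteq> z"
    and N': "N' = upd_net M N x z (rinter M (N x z) (rcomp M (N x y) (N y z)))"
  show ?thesis unfolding N' using comp_case_T[OF assms(1,2,4,5) xyz] .
qed

lemma rels_closed: assumes "multi_alg M" shows "projection_closed_set M (rels M) \<and> compinter_closed M (rels M)"
proof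
  show "projection_closed_set M (rels M)" unfolding projection_closed_set_def
    using proj_closure_props(1)[OF assms] by blast
  show "compinter_closed M (rels M)" unfolding compinter_closed_def
    using rinter_rels[OF assms] rcomp_rels[OF assms] by blast
qed


definition restc :: "('r list \<Rightarrow> ('u \<times> 'u) set) \<Rightarrow> 'v set \<Rightarrow> ('v \<Rightarrow> 'v \<Rightarrow> 'r list) \<Rightarrow> ('v \<Rightarrow> 'u) \<Rightarrow> 'v \<Rightarrow> 'v \<Rightarrow> bool" where
  "restc \<phi> E N u x z \<longleftrightarrow> (\<forall>a\<in>E. \<forall>b\<in>E. a \<noteq> b \<and> \<not> (a = x \<and> b = z) \<and> \<not> (a = z \<and> b = x) \<longrightarrow> (u a, u b) \<in> \<phi> (N a b))"

lemma sol_split: assumes "seq_formalism M U \<phi>" "network_over M (rels M) E N" "x \<in> E" "z \<in> E" "x \<noteq> z"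
  shows "solution \<phi> U E N u \<longleftrightarrow> (\<forall>a\<in>E. u a \<in> U) \<and> (u x, u z) \<in> \<phi> (N x z) \<and> restc \<phi> E N u x z"
proof -
  have zx: "N z x = rconv M (N x z)" using netD(2)[OF assms(2-5)] .
  have r: "N x z \<in> rels M" using netD(1)[OF assms(2-5)] .
  have inv: "\<phi> (N z x) = (\<phi> (N x z))\<inverse>" unfolding zx using F_facts(4)[OF assms(1) r] .
  show ?thesis
  proof
    assume s: "solution \<phi> U E N u"
    then show "(\<forall>a\<in>E. u a \<in> U) \<and> (u x, u z) \<in> \<phi> (N x z) \<and> restc \<phi> E N u x z"
      unfolding solution_def restc_def using assms(3-5) by blast
  next
    assume h: "(\<forall>a\<in>E. u a \<in> U) \<and> (u x, u z) \<in> \<phi> (N x z) \<and> restc \<phi> E N u x z"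
    show "solution \<phi> U E N u" unfolding solution_def
    proof (intro conjI ballI impI)
      fix a assume "a \<in> E" then show "u a \<in> U" using h by blast
    next
      fix a b assume ab: "a \<in> E" "b \<in> E" "a \<noteq> b"
      show "(u a, u b) \<in> \<phi> (N a b)"
      proof (cases "a = x \<and> b = z")
        case True then show ?thesis using h by blast
      next
        case F1: False
        show ?thesis
        proof (cases "a = z \<and> b = x")
          case True
          have "(u x, u z) \<in> \<phi> (N x z)" using h by blast
          then have "(u z, u x) \<in> \<phi> (N z x)" using inv by simp
          then show ?thesis using True by simp
        next
          case False
          then show ?thesis using h F1 ab unfolding restc_def by blast
        qed
      qed
    qed
  qed
qed

lemma restc_upd: assumes "x \<noteq> z"
  shows "restc \<phi> E (upd_net M N x z R) u x z \<longleftrightarrow> restc \<phi> E N u x z"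
proof -
  have e: "\<And>a b. \<not> (a = x \<and> b = z) \<Longrightarrow> \<not> (a = z \<and> b = x) \<Longrightarrow> upd_net M N x z R a b = N a b"
    by (rule upd_net_simps3)
  show ?thesis unfolding restc_def
  proof (intro iffI ballI impI)
    fix a b assume h: "\<forall>a\<in>E. \<forall>b\<in>E. a \<noteq> b \<and> \<not> (a = x \<and> b = z) \<and> \<not> (a = z \<and> b = x) \<longrightarrow> (u a, u b) \<in> \<phi> (upd_net M N x z R a b)"
      and ab: "a \<in> E" "b \<in> E" "a \<noteq> b \<and> \<not> (a = x \<and> b = z) \<and> \<not> (a = z \<and> b = x)"
    have "(u a, u b) \<in> \<phi> (upd_net M N x z R a b)" using h ab by blast
    moreover have "upd_net M N x z R a b = N a b" using e ab(3) by blast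
    ultimately show "(u a, u b) \<in> \<phi> (N a b)" by simp
  next
    fix a b assume h: "\<forall>a\<in>E. \<forall>b\<in>E. a \<noteq> b \<and> \<not> (a = x \<and> b = z) \<and> \<not> (a = z \<and> b = x) \<longrightarrow> (u a, u b) \<in> \<phi> (N a b)"
      and ab: "a \<in> E" "b \<in> E" "a \<noteq> b \<and> \<not> (a = x \<and> b = z) \<and> \<not> (a = z \<and> b = x)"
    have "(u a, u b) \<in> \<phi> (N a b)" using h ab by blast
    moreover have "upd_net M N x z R a b = N a b" using e ab(3) by blast
    ultimately show "(u a, u b) \<in> \<phi> (upd_net M N x z R a b)" by simp
  qed
qed

lemma sol_upd: assumes "seq_formalism M U \<phi>" "network_over M (rels M) E (upd_net M N x z R)" "x \<in> E" "z \<in> E" "x \<noteq> z"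
  shows "solution \<phi> U E (upd_net M N x z R) u \<longleftrightarrow> (\<forall>a\<in>E. u a \<in> U) \<and> (u x, u z) \<in> \<phi> R \<and> restc \<phi> E N u x z"
  using sol_split[OF assms(1,2,3,4,5), of u] restc_upd[OF assms(5), of \<phi> E M N R u] upd_net_simps1[OF assms(5), of M N R]
  by simp

lemma step_sol: assumes F: "seq_formalism M U \<phi>" and n: "network_over M (rels M) E N" and st: "alg_step M E N N'"
  shows "solution \<phi> U E N u \<longleftrightarrow> solution \<phi> U E N' u"
proof -
  have MA: "multi_alg M" using F_facts(1)[OF F] .
  have N'n: "network_over M (rels M) E N'"
    using step_network[OF MA _ _ _ n st] rels_closed[OF MA] by blast
  show ?thesis using st unfolding alg_step_def
  proof (elim disjE bexE exE conjE)
    fix x z R assume xz: "x \<in> E" "z \<in> E" "x \<noteq> z" and pc: "proj_closure M (N x z) R" and N': "N' = upd_net M N x z R"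
    have "\<phi> R = \<phi> (N x z)" using F_facts(3)[OF F netD(1)[OF n xz] pc] .
    moreover have "network_over M (rels M) E (upd_net M N x z R)" using N'n N' by simp
    ultimately show ?thesis unfolding N' using sol_split[OF F n xz, of u] sol_upd[OF F _ xz, of N R u] by simp
  next
    fix x y z assume xyz: "x \<in> E" "y \<in> E" "z \<in> E" "x \<noteq> y" "y \<noteq> z" "x \<noteq> z"
      and N': "N' = upd_net M N x z (rinter M (N x z) (rcomp M (N x y) (N y z)))"
    define C where "C = rcomp M (N x y) (N y z)"
    have rxz: "N x z \<in> rels M" using netD(1)[OF n xyz(1,3,6)] .
    have rxy: "N x y \<in> rels M" using netD(1)[OF n xyz(1,2,4)] .
    have ryz: "N y z \<in> rels M" using netD(1)[OF n xyz(2,3,5)] .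
    have phiR: "\<phi> (rinter M (N x z) C) = \<phi> (N x z) \<inter> \<phi> C"
      unfolding C_def using F_facts(6)[OF F rxz rcomp_rels[OF MA rxy ryz]] .
    have univ: "\<phi> (N x z) \<subseteq> \<phi> (runiv M)"
      using F_facts(6)[OF F rxz runiv_rels[OF MA]] rinter_univ[OF MA rxz] by auto
    have comp: "\<phi> (N x y) O \<phi> (N y z) \<inter> \<phi> (runiv M) \<subseteq> \<phi> C"
      unfolding C_def using F_facts(5)[OF F rxy ryz] .
    have N'n2: "network_over M (rels M) E (upd_net M N x z (rinter M (N x z) C))" using N'n N' unfolding C_def by simp
    note S1 = sol_split[OF F n xyz(1,3,6), of u]
    note S2 = sol_upd[OF F N'n2 xyz(1,3,6), of u]
    have key: "restc \<phi> E N u x z \<Longrightarrow> (u x, u z) \<in> \<phi> (N x z) \<Longrightarrow> (u x, u z) \<in> \<phi> C"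
    proof -
      assume r: "restc \<phi> E N u x z" and h: "(u x, u z) \<in> \<phi> (N x z)"
      have "(u x, u y) \<in> \<phi> (N x y)" using r xyz unfolding restc_def by blast
      moreover have "(u y, u z) \<in> \<phi> (N y z)" using r xyz unfolding restc_def by blast
      ultimately have "(u x, u z) \<in> \<phi> (N x y) O \<phi> (N y z)" by blast
      moreover have "(u x, u z) \<in> \<phi> (runiv M)" using h univ by blast
      ultimately show ?thesis using comp by blast
    qed
    have "solution \<phi> U E N u \<longleftrightarrow> solution \<phi> U E (upd_net M N x z (rinter M (N x z) C)) u"
      unfolding S1 S2 phiR using key by blast
    then show ?thesis unfolding N' C_def .
  qed
qed

lemma steps_sol: assumes F: "seq_formalism M U \<phi>" and n: "network_over M (rels M) E N" and st: "(alg_step M E)\<^sup>*\<^sup>* N N'"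
  shows "network_over M (rels M) E N' \<and> (solution \<phi> U E N u \<longleftrightarrow> solution \<phi> U E N' u)"
  using st
proof (induction rule: rtranclp_induct)
  case base then show ?case using n by simp
next
  case (step y z)
  have MA: "multi_alg M" using F_facts(1)[OF F] .
  have ny: "network_over M (rels M) E y" using step(3) by simp
  have nz: "network_over M (rels M) E z" using step_network[OF MA _ _ _ ny step(2)] rels_closed[OF MA] by blast
  have "solution \<phi> U E y u \<longleftrightarrow> solution \<phi> U E z u" using step_sol[OF F ny step(2)] .
  then show ?case using nz step(3) by simp
qed


definition fm :: "'r malg \<Rightarrow> 'v set \<Rightarrow> ('v \<Rightarrow> 'v \<Rightarrow> 'r list) \<Rightarrow> nat" where
  "fm M E N = (\<Sum>p\<in>{p. fst p \<in> E \<and> snd p \<in> E \<and> fst p \<noteq> snd p}. gm M (N (fst p) (snd p)))"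

lemma fm_upd_less: assumes MA: "multi_alg M" and n: "network_over M (rels M) E N" and xz: "x \<in> E" "z \<in> E" "x \<noteq> z"
  and R: "R \<in> rels M" "rsubseteq M R (N x z)" "R \<noteq> N x z"
  shows "fm M E (upd_net M N x z R) < fm M E N"
  unfolding fm_def
proof (rule sum_strict_mono_ex1)
  have "{p. fst p \<in> E \<and> snd p \<in> E \<and> fst p \<noteq> snd p} \<subseteq> E \<times> E" by auto
  then show "finite {p. fst p \<in> E \<and> snd p \<in> E \<and> fst p \<noteq> snd p}"
    using netFin[OF n] by (meson finite_SigmaI finite_subset)
  have rxz: "N x z \<in> rels M" using netD(1)[OF n xz] .
  have zx: "N z x = rconv M (N x z)" using netD(2)[OF n xz] .
  show "\<forall>p\<in>{p. fst p \<in> E \<and> snd p \<in> E \<and> fst p \<noteq> snd p}. gm M (upd_net M N x z R (fst p) (snd p)) \<le> gm M (N (fst p) (snd p))"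
  proof
    fix p assume p: "p \<in> {p. fst p \<in> E \<and> snd p \<in> E \<and> fst p \<noteq> snd p}"
    obtain a b where ab: "p = (a, b)" by (cases p)
    have ab': "a \<in> E" "b \<in> E" "a \<noteq> b" using p ab by auto
    show "gm M (upd_net M N x z R (fst p) (snd p)) \<le> gm M (N (fst p) (snd p))"
    proof (cases "a = x \<and> b = z")
      case True
      have "gm M R \<le> gm M (N x z)" using gm_mono[OF MA rxz R(1) R(2)] .
      then show ?thesis using True ab upd_net_simps1[OF xz(3), of M N R] by simp
    next
      case F1: False
      show ?thesis
      proof (cases "a = z \<and> b = x")
        case True
        have "rsubseteq M (rconv M R) (rconv M (N x z))" using rconv_mono[OF MA R(1) rxz R(2)] .
        then have "gm M (rconv M R) \<le> gm M (rconv M (N x z))"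
          using gm_mono[OF MA rconv_rels[OF MA rxz] rconv_rels[OF MA R(1)]] by blast
        then show ?thesis using True ab upd_net_simps2[OF xz(3), of M N R] zx by simp
      next
        case False
        then show ?thesis using F1 ab upd_net_simps3[OF F1 False, of M N R] by simp
      qed
    qed
  qed
  have "gm M R < gm M (N x z)" using gm_less[OF MA rxz R(1) R(2) R(3)] .
  then show "\<exists>p\<in>{p. fst p \<in> E \<and> snd p \<in> E \<and> fst p \<noteq> snd p}. gm M (upd_net M N x z R (fst p) (snd p)) < gm M (N (fst p) (snd p))"
    apply (intro bexI[of _ "(x, z)"])
    using upd_net_simps1[OF xz(3), of M N R] xz by auto
qed

lemma closure_exists: assumes MA: "multi_alg M" and T: "T \<subseteq> rels M" "projection_closed_set M T" "compinter_closed M T"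
  and n: "network_over M T E N"
  shows "\<exists>N'. alg_closure M E N N' \<and> network_over M T E N'"
  using n
proof (induction "fm M E N" arbitrary: N rule: less_induct)
  case less
  have nr: "network_over M (rels M) E N" using network_over_mono less(2) T by blast
  have r: "\<And>a b. a \<in> E \<Longrightarrow> b \<in> E \<Longrightarrow> a \<noteq> b \<Longrightarrow> N a b \<in> rels M"
    using netD(1)[OF nr] by blast
  show ?case
  proof (cases "alg_closed M E N")
    case True
    then show ?thesis unfolding alg_closure_def using less(2) by blast
  next
    case False
    have "\<exists>N'. alg_step M E N N' \<and> fm M E N' < fm M E N"
    proof (cases "proj_closed_net M E N")
      case False
      then obtain x z where xz: "x \<in> E" "z \<in> E" "x \<noteq> z" and npc: "\<not> proj_closed M (N x z)"
        unfolding proj_closed_net_def by blast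
      obtain R where pc: "proj_closure M (N x z) R" using proj_closure_exists[OF MA] r[OF xz] by blast
      note pp = proj_closure_props[OF MA r[OF xz] pc]
      have "R \<noteq> N x z" using pc npc unfolding proj_closure_def by blast
      then have lt: "fm M E (upd_net M N x z R) < fm M E N" using fm_upd_less[OF MA nr xz pp(1,2)] by blast
      have st: "alg_step M E N (upd_net M N x z R)" unfolding alg_step_def
        apply (rule disjI1) apply (rule bexI[OF _ xz(1)]) apply (rule bexI[OF _ xz(2)])
        apply (rule conjI[OF xz(3)]) apply (rule exI[of _ R]) using pc by simp
      show ?thesis using st lt by blast
    next
      case True
      then have "\<not> comp_closed_net M E N" using False unfolding alg_closed_def by blast
      then obtain x y z where xyz: "x \<in> E" "y \<in> E" "z \<in> E" "x \<noteq> y" "y \<noteq> z" "x \<noteq> z"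
        and nc: "\<not> rsubseteq M (N x z) (rcomp M (N x y) (N y z))"
        unfolding comp_closed_net_def by blast
      define C where "C = rcomp M (N x y) (N y z)"
      have C: "C \<in> rels M" unfolding C_def using rcomp_rels[OF MA r[OF xyz(1,2,4)] r[OF xyz(2,3,5)]] .
      have rxz: "N x z \<in> rels M" using r[OF xyz(1,3,6)] .
      have "rinter M (N x z) C \<noteq> N x z" using rinter_eq_le[OF MA rxz C] nc unfolding C_def by blast
      then have "fm M E (upd_net M N x z (rinter M (N x z) C)) < fm M E N"
        using fm_upd_less[OF MA nr xyz(1,3,6) rinter_rels[OF MA rxz C] rinter_le1[OF MA rxz C]] by blast
      moreover have "alg_step M E N (upd_net M N x z (rinter M (N x z) C))" unfolding alg_step_def C_def
        apply (rule disjI2) apply (rule bexI[OF _ xyz(1)]) apply (rule bexI[OF _ xyz(2)]) apply (rule bexI[OF _ xyz(3)])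
        using xyz by simp
      ultimately show ?thesis by blast
    qed
    then obtain N' where st: "alg_step M E N N'" and lt: "fm M E N' < fm M E N" by blast
    have "network_over M T E N'" using step_network[OF MA T less(2) st] .
    then obtain N'' where "alg_closure M E N' N''" "network_over M T E N''" using less(1)[OF lt] by blast
    then have "(alg_step M E)\<^sup>*\<^sup>* N N''" "alg_closed M E N''" "network_over M T E N''"
      unfolding alg_closure_def using st by (auto intro: converse_rtranclp_into_rtranclp)
    then show ?thesis unfolding alg_closure_def by blast
  qed
qed


lemma netI: assumes "finite E" "\<And>a b. a \<in> E \<Longrightarrow> b \<in> E \<Longrightarrow> a \<noteq> b \<Longrightarrow> N a b \<in> T"
  "\<And>a b. a \<in> E \<Longrightarrow> b \<in> E \<Longrightarrow> a \<noteq> b \<Longrightarrow> N b a = rconv M (N a b)"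
  shows "network_over M T E N"
  unfolding network_over_def using assms by blast

lemma acD: assumes "alg_consistent M E N"
  shows "network_over M (rels M) E N" "alg_closed M E N" "\<not> triv_incons M E N"
  using assms unfolding alg_consistent_def network_def by blast+


theorem mainTheorem2:
  fixes M :: "'r malg" and U :: "'u set" and \<phi> :: "'r list \<Rightarrow> ('u \<times> 'u) set"
    and S S' :: "'r list set" and H :: "'r list \<Rightarrow> 'r list"
  assumes F: "seq_formalism M U \<phi>"
    and S_sub: "S \<subseteq> rels M" and S'_sub: "S' \<subseteq> rels M"
    and H: "refinement M S S' H"
    and A1: "alg_stable M S H TYPE('v)"
    and A2: "\<forall>(E :: 'v set) N. network_over M S' E N \<and> alg_consistent M E N \<longrightarrow> satisfiable \<phi> U E N"
  shows "(\<forall>(E :: 'v set) N. network_over M S E N \<and> alg_consistent M E N \<longrightarrow> satisfiable \<phi> U E N)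
         \<and> (projection_closed_set M S \<and> compinter_closed M S \<longrightarrow> alg_tractable M U \<phi> S TYPE('v))"
proof -
  have MA: "multi_alg M" using F_facts(1)[OF F] .
  have P1: "\<forall>(E :: 'v set) N. network_over M S E N \<and> alg_consistent M E N \<longrightarrow> satisfiable \<phi> U E N"
  proof (intro allI impI)
    fix E :: "'v set" and N assume a: "network_over M S E N \<and> alg_consistent M E N"
    have ac: "alg_consistent M E (apply_ref H N)" using A1 a unfolding alg_stable_def by blast
    have nS: "network_over M S E N" using a by blast
    have Hs: "\<And>R. R \<in> S \<Longrightarrow> H R \<in> S'" using H unfolding refinement_def by blast
    have "network_over M S' E (apply_ref H N)"
    proof (rule netI)
      show "finite E" using netFin[OF nS] .
      fix a b assume ab: "a \<in> E" "b \<in> E" "a \<noteq> b"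
      show "apply_ref H N a b \<in> S'" unfolding apply_ref_def using Hs[OF netD(1)[OF nS ab]] .
      show "apply_ref H N b a = rconv M (apply_ref H N a b)" using netD(2)[OF acD(1)[OF ac] ab] .
    qed
    then obtain u where u: "solution \<phi> U E (apply_ref H N) u" using A2 ac unfolding satisfiable_def by blast
    have "solution \<phi> U E N u" unfolding solution_def
    proof (intro conjI ballI impI)
      fix x assume "x \<in> E" then show "u x \<in> U" using u unfolding solution_def by blast
    next
      fix x y assume xy: "x \<in> E" "y \<in> E" "x \<noteq> y"
      have s: "N x y \<in> S" using netD(1)[OF nS xy] .
      have h: "H (N x y) \<in> S'" "rsubseteq M (H (N x y)) (N x y)" using H s unfolding refinement_def by blast+
      have "(u x, u y) \<in> \<phi> (H (N x y))" using u xy unfolding solution_def apply_ref_def by blast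
      moreover have "\<phi> (H (N x y)) \<subseteq> \<phi> (N x y)" using phi_le[OF F _ _ h(2)] h(1) s S_sub S'_sub by blast
      ultimately show "(u x, u y) \<in> \<phi> (N x y)" by blast
    qed
    then show "satisfiable \<phi> U E N" unfolding satisfiable_def by blast
  qed
  have P2: "alg_tractable M U \<phi> S TYPE('v)" if cl: "projection_closed_set M S" "compinter_closed M S"
    unfolding alg_tractable_def
  proof (intro allI impI)
    fix E :: "'v set" and N assume n: "network_over M S E N"
    have nr: "network_over M (rels M) E N" using network_over_mono n S_sub by blast
    show "satisfiable \<phi> U E N \<longleftrightarrow> (\<forall>N'. alg_closure M E N N' \<longrightarrow> \<not> triv_incons M E N')"
    proof
      assume "satisfiable \<phi> U E N"
      then obtain u where u: "solution \<phi> U E N u" unfolding satisfiable_def by blast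
      show "\<forall>N'. alg_closure M E N N' \<longrightarrow> \<not> triv_incons M E N'"
      proof (intro allI impI notI)
        fix N' assume c: "alg_closure M E N N'" and t: "triv_incons M E N'"
        have ss: "network_over M (rels M) E N' \<and> (solution \<phi> U E N u \<longleftrightarrow> solution \<phi> U E N' u)"
          using steps_sol[OF F nr] c unfolding alg_closure_def by blast
        obtain x y where xy: "x \<in> E" "y \<in> E" "x \<noteq> y" "rtriv M (N' x y)" using t unfolding triv_incons_def by blast
        have "N' x y \<in> rels M" using netD(1)[OF conjunct1[OF ss] xy(1-3)] .
        then have "\<phi> (N' x y) = {}" using rtriv_empty[OF F _ xy(4)] by blast
        then show False using ss u xy unfolding solution_def by blast
      qed
    next
      assume h: "\<forall>N'. alg_closure M E N N' \<longrightarrow> \<not> triv_incons M E N'"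
      obtain N' where c: "alg_closure M E N N'" and n': "network_over M S E N'"
        using closure_exists[OF MA S_sub cl n] by blast
      have "alg_consistent M E N'" unfolding alg_consistent_def network_def
        using h c network_over_mono[OF n' S_sub] unfolding alg_closure_def by blast
      then obtain u where u: "solution \<phi> U E N' u" using P1 n' unfolding satisfiable_def by blast
      have "solution \<phi> U E N u" using steps_sol[OF F nr, of N' u] c u unfolding alg_closure_def by blast
      then show "satisfiable \<phi> U E N" unfolding satisfiable_def by blast
    qed
  qed
  show ?thesis using P1 P2 by blast
qed

end
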